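(* Let $n\geq 1$ and $N_1,\dots,N_n\geq 0$ be integers. Let $Q$ be the quiver with vertices $1,\dots,n$, arrows $x_{i}:i-1\to i$ for $2\le i\le n$, and $N_i$ loops at vertex $i$ for each $i$. Let $A(n)=\Bbbk Q/(\geq 2)$. Then $$\operatorname{fpd}\big(A(n)\text{-mod}\big)=\max\{N_1,\dots,N_n\}.$$
   Context: $\Bbbk$ is an algebraically closed field; $\Bbbk Q$ is the path algebra with $e_i\alpha=\delta_{i,t(\alpha)}\alpha$, $\alpha e_j=\delta_{j,s(\alpha)}\alpha$; $(\geq 2)$ is the ideal generated by paths of length $\geq 2$; $A\text{-mod}$ is the category of finite-dimensional left $A$-modules. For a $\Bbbk$-linear abelian category $\mathcal C$: an object $M$ is a brick if $\mathrm{Hom}(M,M)=\Bbbk$; a finite set $\phi=\{X_1,\dots,X_m\}$ of nonzero objects is a brick set if each $X_i$ is a brick and $\dim\mathrm{Hom}(X_i,X_j)=\delta_{ij}$; its adjacency matrix is $A(\phi)=(\dim\mathrm{Ext}^1_{\mathcal C}(X_i,X_j))_{i,j}$; and $\operatorname{fpd}(\mathcal C)=\sup_{\phi}\rho(A(\phi))$, the supremum over all brick sets of the spectral radius $\rho$. *)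

theory Defs
  imports "Jordan_Normal_Form.Spectral_Radius" "HOL-Library.Function_Algebras"
    "HOL-Library.Extended_Real" "HOL-Computational_Algebra.Polynomial"
begin

datatype arr = ArrX nat | Loop nat nat

definition arrows :: "nat \<Rightarrow> (nat \<Rightarrow> nat) \<Rightarrow> arr set" where
  "arrows n N = {ArrX i | i. 2 \<le> i \<and> i \<le> n} \<union> {Loop i j | i j. 1 \<le> i \<and> i \<le> n \<and> j < N i}"

fun src :: "arr \<Rightarrow> nat" where
  "src (ArrX i) = i - 1" | "src (Loop i j) = i"

fun tgt :: "arr \<Rightarrow> nat" where
  "tgt (ArrX i) = i" | "tgt (Loop i j) = i"

text \<open>Matrices over k as functions row => column => entry.\<close>
type_synonym 'k matr = "nat \<Rightarrow> nat \<Rightarrow> 'k"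

definition mmul :: "nat \<Rightarrow> 'k::comm_ring_1 matr \<Rightarrow> 'k matr \<Rightarrow> 'k matr" where
  "mmul m A B = (\<lambda>r c. \<Sum>l<m. A r l * B l c)"

definition bounded_matr :: "nat \<Rightarrow> nat \<Rightarrow> 'k::zero matr \<Rightarrow> bool" where
  "bounded_matr p q A \<longleftrightarrow> (\<forall>r c. (p \<le> r \<or> q \<le> c) \<longrightarrow> A r c = 0)"

text \<open>Finite-dimensional representations of Q (with space k^(dimv v) at vertex v and
  matrix mapv alpha for the arrow alpha) satisfying all relations of length 2,
  i.e. finite-dimensional modules over A(n) = kQ/(paths of length >= 2).\<close>
record 'k rep = dimv :: "nat \<Rightarrow> nat"  mapv :: "arr \<Rightarrow> 'k matr"

definition is_rep :: "nat \<Rightarrow> (nat \<Rightarrow> nat) \<Rightarrow> 'k::comm_ring_1 rep \<Rightarrow> bool" where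
  "is_rep n N X \<longleftrightarrow>
     (\<forall>v. v \<notin> {1..n} \<longrightarrow> dimv X v = 0) \<and>
     (\<forall>\<alpha>. \<alpha> \<notin> arrows n N \<longrightarrow> mapv X \<alpha> = 0) \<and>
     (\<forall>\<alpha>\<in>arrows n N. bounded_matr (dimv X (tgt \<alpha>)) (dimv X (src \<alpha>)) (mapv X \<alpha>)) \<and>
     (\<forall>\<alpha>\<in>arrows n N. \<forall>\<beta>\<in>arrows n N. tgt \<alpha> = src \<beta> \<longrightarrow>
        mmul (dimv X (src \<beta>)) (mapv X \<beta>) (mapv X \<alpha>) = 0)"

definition nonzero_rep :: "'k rep \<Rightarrow> bool" where
  "nonzero_rep X \<longleftrightarrow> (\<exists>v. 0 < dimv X v)"

definition Hom :: "nat \<Rightarrow> (nat \<Rightarrow> nat) \<Rightarrow> 'k::comm_ring_1 rep \<Rightarrow> 'k rep \<Rightarrow> (nat \<Rightarrow> 'k matr) set" where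
  "Hom n N X Y = {h. (\<forall>v. bounded_matr (dimv Y v) (dimv X v) (h v)) \<and>
     (\<forall>\<alpha>\<in>arrows n N. mmul (dimv Y (src \<alpha>)) (mapv Y \<alpha>) (h (src \<alpha>))
                     = mmul (dimv X (tgt \<alpha>)) (h (tgt \<alpha>)) (mapv X \<alpha>))}"

definition hscale :: "'k::field \<Rightarrow> (nat \<Rightarrow> 'k matr) \<Rightarrow> (nat \<Rightarrow> 'k matr)" where
  "hscale c h = (\<lambda>v r s. c * h v r s)"

definition cscale :: "'k::field \<Rightarrow> (arr \<Rightarrow> 'k matr) \<Rightarrow> (arr \<Rightarrow> 'k matr)" where
  "cscale c f = (\<lambda>\<alpha> r s. c * f \<alpha> r s)"

definition hom_dim :: "nat \<Rightarrow> (nat \<Rightarrow> nat) \<Rightarrow> 'k::field rep \<Rightarrow> 'k rep \<Rightarrow> nat" where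
  "hom_dim n N X Y = vector_space.dim hscale (Hom n N X Y)"

text \<open>Ext^1(X,Y), classifying extensions 0 -> Y -> E -> X -> 0: E = Y (+) X with
  E_alpha = [[Y_alpha, f_alpha],[0, X_alpha]]; the relations of E give the cocycle
  condition, and base changes [[1,h],[0,1]] give the coboundaries.\<close>
definition Ext_cocycles :: "nat \<Rightarrow> (nat \<Rightarrow> nat) \<Rightarrow> 'k::comm_ring_1 rep \<Rightarrow> 'k rep \<Rightarrow> (arr \<Rightarrow> 'k matr) set" where
  "Ext_cocycles n N X Y = {f.
     (\<forall>\<alpha>. \<alpha> \<notin> arrows n N \<longrightarrow> f \<alpha> = 0) \<and>
     (\<forall>\<alpha>\<in>arrows n N. bounded_matr (dimv Y (tgt \<alpha>)) (dimv X (src \<alpha>)) (f \<alpha>)) \<and>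
     (\<forall>\<alpha>\<in>arrows n N. \<forall>\<beta>\<in>arrows n N. tgt \<alpha> = src \<beta> \<longrightarrow>
        mmul (dimv Y (src \<beta>)) (mapv Y \<beta>) (f \<alpha>) + mmul (dimv X (tgt \<alpha>)) (f \<beta>) (mapv X \<alpha>) = 0)}"

definition Ext_coboundaries :: "nat \<Rightarrow> (nat \<Rightarrow> nat) \<Rightarrow> 'k::comm_ring_1 rep \<Rightarrow> 'k rep \<Rightarrow> (arr \<Rightarrow> 'k matr) set" where
  "Ext_coboundaries n N X Y = {f. \<exists>h. (\<forall>v. bounded_matr (dimv Y v) (dimv X v) (h v)) \<and>
     f = (\<lambda>\<alpha>. if \<alpha> \<in> arrows n N
               then mmul (dimv Y (src \<alpha>)) (mapv Y \<alpha>) (h (src \<alpha>)) - mmul (dimv X (tgt \<alpha>)) (h (tgt \<alpha>)) (mapv X \<alpha>)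
               else 0)}"

definition ext1_dim :: "nat \<Rightarrow> (nat \<Rightarrow> nat) \<Rightarrow> 'k::field rep \<Rightarrow> 'k rep \<Rightarrow> nat" where
  "ext1_dim n N X Y = vector_space.dim cscale (Ext_cocycles n N X Y)
                      - vector_space.dim cscale (Ext_coboundaries n N X Y)"

definition brick_set :: "nat \<Rightarrow> (nat \<Rightarrow> nat) \<Rightarrow> 'k::field rep list \<Rightarrow> bool" where
  "brick_set n N Xs \<longleftrightarrow> (\<forall>X\<in>set Xs. is_rep n N X \<and> nonzero_rep X) \<and>
     (\<forall>i<length Xs. \<forall>j<length Xs. hom_dim n N (Xs ! i) (Xs ! j) = (if i = j then 1 else 0))"

definition adj_matrix :: "nat \<Rightarrow> (nat \<Rightarrow> nat) \<Rightarrow> 'k::field rep list \<Rightarrow> complex mat" where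
  "adj_matrix n N Xs = mat (length Xs) (length Xs) (\<lambda>(i, j). of_nat (ext1_dim n N (Xs ! i) (Xs ! j)))"

definition fpd :: "'k::field itself \<Rightarrow> nat \<Rightarrow> (nat \<Rightarrow> nat) \<Rightarrow> ereal" where
  "fpd _ n N = (SUP Xs \<in> {Xs :: 'k rep list. brick_set n N Xs \<and> Xs \<noteq> []}.
                  ereal (spectral_radius (adj_matrix n N Xs)))"

end

theory Submission
  imports Defs
begin

definition gsc :: "'k::field \<Rightarrow> ('a \<Rightarrow> 'k matr) \<Rightarrow> ('a \<Rightarrow> 'k matr)" where
  "gsc c f = (\<lambda>a r s. c * f a r s)"

lemma hscale_gsc: "hscale = gsc"
  by (auto simp: hscale_def gsc_def fun_eq_iff)

lemma cscale_gsc: "cscale = gsc"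
  by (auto simp: cscale_def gsc_def fun_eq_iff)

interpretation G: vector_space "gsc :: 'k::field \<Rightarrow> ('a \<Rightarrow> 'k matr) \<Rightarrow> ('a \<Rightarrow> 'k matr)"
  by unfold_locales (auto simp: gsc_def fun_eq_iff algebra_simps)

lemma gsc_apply[simp]: "gsc c f a r s = c * f a r s"
  by (simp add: gsc_def)

lemma sum_fun_app: "(sum f F) a = sum (\<lambda>x. f x a) F"
  by (induction F rule: infinite_finite_induct) auto

lemma G_dim_ge:
  fixes V :: "('a \<Rightarrow> 'k::field matr) set"
  assumes "S \<subseteq> V" "G.independent S" "V \<subseteq> G.span T" "finite T"
  shows "card S \<le> G.dim V"
proof -
  obtain B where B: "S \<subseteq> B" "B \<subseteq> V" "G.independent B" "V \<subseteq> G.span B"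
    using G.maximal_independent_subset_extend[OF assms(1,2)] by blast
  have "B \<subseteq> G.span T" using B(2) assms(3) by blast
  from G.independent_span_bound[OF assms(4) B(3) this] have "finite B" by blast
  have "card B = G.dim V" using G.basis_card_eq_dim[OF B(2) B(4) B(3)] .
  moreover have "card S \<le> card B" using card_mono[OF \<open>finite B\<close> B(1)] .
  ultimately show ?thesis by simp
qed

lemma G_dim_mono:
  fixes V :: "('a \<Rightarrow> 'k::field matr) set"
  assumes "V \<subseteq> W" "W \<subseteq> G.span T" "finite T"
  shows "G.dim V \<le> G.dim W"
proof -
  obtain B where B: "B \<subseteq> V" "G.independent B" "V \<subseteq> G.span B" "card B = G.dim V"
    using G.basis_exists by blast
  have "card B \<le> G.dim W"
    using G_dim_ge[of B W T] B assms by blast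
  with B show ?thesis by simp
qed

definition gunit :: "'a \<times> nat \<times> nat \<Rightarrow> ('a \<Rightarrow> 'k::field matr)" where
  "gunit x = (\<lambda>a r s. if (a, r, s) = x then 1 else 0)"

lemma G_span_support:
  fixes g :: "'a \<Rightarrow> 'k::field matr"
  assumes F: "finite F" and g: "\<And>a r s. (a, r, s) \<notin> F \<Longrightarrow> g a r s = 0"
  shows "g \<in> G.span (gunit ` F)"
proof -
  have eq: "g = (\<Sum>x\<in>F. gsc (case x of (a, r, s) \<Rightarrow> g a r s) (gunit x))"
  proof (intro ext)
    fix a r s
    have "(\<Sum>x\<in>F. gsc (case x of (a, r, s) \<Rightarrow> g a r s) (gunit x)) a r s
        = (\<Sum>x\<in>F. (case x of (a, r, s) \<Rightarrow> g a r s) * gunit x a r s)"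
      by (simp add: sum_fun_app)
    also have "\<dots> = (\<Sum>x\<in>F. if x = (a, r, s) then g a r s else 0)"
      by (intro sum.cong) (auto simp: gunit_def)
    also have "\<dots> = g a r s"
      using g by (subst sum.delta[OF F]) auto
    finally show "g a r s = (\<Sum>x\<in>F. gsc (case x of (a, r, s) \<Rightarrow> g a r s) (gunit x)) a r s" by simp
  qed
  have "(\<Sum>x\<in>F. gsc (case x of (a, r, s) \<Rightarrow> g a r s) (gunit x)) \<in> G.span (gunit ` F)"
    by (intro G.span_sum G.span_scale G.span_base) auto
  with eq show ?thesis by simp
qed

definition idm :: "nat \<Rightarrow> 'k::comm_ring_1 matr" where
  "idm d = (\<lambda>r c. if r = c \<and> r < d then 1 else 0)"

lemma mmul_zero_left[simp]: "mmul m 0 B = 0"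
  by (simp add: mmul_def fun_eq_iff)

lemma mmul_zero_right[simp]: "mmul m A 0 = 0"
  by (simp add: mmul_def fun_eq_iff)

lemma mmul_zero_left'[simp]: "mmul m (\<lambda>r c. 0) B = 0"
  by (simp add: mmul_def fun_eq_iff)

lemma mmul_zero_right'[simp]: "mmul m A (\<lambda>r c. 0) = 0"
  by (simp add: mmul_def fun_eq_iff)

lemma mmul_idl: "bounded_matr p q B \<Longrightarrow> mmul p (idm p) B = B"
proof (intro ext)
  fix r c assume b: "bounded_matr p q B"
  have "mmul p (idm p) B r c = (\<Sum>l<p. if l = r then (if r < p then B r c else 0) else 0)"
    unfolding mmul_def idm_def by (intro sum.cong) auto
  also have "\<dots> = B r c" using b by (simp add: sum.delta bounded_matr_def)
  finally show "mmul p (idm p) B r c = B r c" .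
qed

lemma mmul_idr: "bounded_matr p q A \<Longrightarrow> mmul q A (idm q) = A"
proof (intro ext)
  fix r c assume b: "bounded_matr p q A"
  have "mmul q A (idm q) r c = (\<Sum>l<q. if l = c then (if c < q then A r c else 0) else 0)"
    unfolding mmul_def idm_def by (intro sum.cong) auto
  also have "\<dots> = A r c" using b by (simp add: sum.delta bounded_matr_def)
  finally show "mmul q A (idm q) r c = A r c" .
qed

lemma mmul_assoc: "mmul m (mmul k A B) C = mmul k A (mmul m B C)"
  by (simp add: mmul_def fun_eq_iff sum_distrib_left sum_distrib_right mult.assoc sum.swap[of _ "{..<m}"])

lemma mmul_bounded: "bounded_matr p k A \<Longrightarrow> bounded_matr k q B \<Longrightarrow> bounded_matr p q (mmul k A B)"
  by (auto simp: mmul_def bounded_matr_def)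

lemma idm_bounded: "bounded_matr d d (idm d)"
  by (auto simp: idm_def bounded_matr_def)

definition idh :: "'k::comm_ring_1 rep \<Rightarrow> nat \<Rightarrow> 'k matr" where
  "idh X = (\<lambda>v. idm (dimv X v))"

lemma rep_dim_out: "is_rep n N X \<Longrightarrow> v \<notin> {1..n} \<Longrightarrow> dimv X v = 0"
  by (simp add: is_rep_def)

lemma rep_map_out: "is_rep n N X \<Longrightarrow> \<alpha> \<notin> arrows n N \<Longrightarrow> mapv X \<alpha> = 0"
  by (simp add: is_rep_def)

lemma rep_bnd: "is_rep n N X \<Longrightarrow> bounded_matr (dimv X (tgt \<alpha>)) (dimv X (src \<alpha>)) (mapv X \<alpha>)"
  by (cases "\<alpha> \<in> arrows n N") (auto simp: is_rep_def bounded_matr_def)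

lemma rep_rel: "is_rep n N X \<Longrightarrow> \<alpha> \<in> arrows n N \<Longrightarrow> \<beta> \<in> arrows n N \<Longrightarrow> tgt \<alpha> = src \<beta> \<Longrightarrow>
    mmul (dimv X (src \<beta>)) (mapv X \<beta>) (mapv X \<alpha>) = 0"
  by (simp add: is_rep_def)

lemma bnd_zero: "bounded_matr p q A \<Longrightarrow> (p \<le> r \<or> q \<le> c) \<Longrightarrow> A r c = 0"
  by (auto simp: bounded_matr_def)

lemma bnd_zero_dim: "bounded_matr 0 q A \<Longrightarrow> A = 0" "bounded_matr p 0 A \<Longrightarrow> A = 0"
  by (auto simp: bounded_matr_def fun_eq_iff)

lemma finite_arrows: "finite (arrows n N)"
proof -
  have "arrows n N \<subseteq> ArrX ` {..n} \<union> (\<lambda>(i, j). Loop i j) ` (SIGMA i:{..n}. {..<N i})"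
    unfolding arrows_def by auto
  moreover have "finite (ArrX ` {..n} \<union> (\<lambda>(i, j). Loop i j) ` (SIGMA i:{..n}. {..<N i}))"
    by auto
  ultimately show ?thesis using finite_subset by blast
qed

lemma hom_dim_G: "hom_dim n N X Y = G.dim (Hom n N X Y)"
  by (simp add: hom_dim_def hscale_gsc)

lemma ext1_dim_G: "ext1_dim n N X Y = G.dim (Ext_cocycles n N X Y) - G.dim (Ext_coboundaries n N X Y)"
  by (simp add: ext1_dim_def cscale_gsc)

lemma Hom_span:
  assumes X: "is_rep n N X" and Y: "is_rep n N Y"
  shows "Hom n N X Y \<subseteq> G.span (gunit ` (SIGMA v:{1..n}. {..<dimv Y v} \<times> {..<dimv X v}))"
proof
  fix h assume h: "h \<in> Hom n N X Y"
  show "h \<in> G.span (gunit ` (SIGMA v:{1..n}. {..<dimv Y v} \<times> {..<dimv X v}))"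
  proof (rule G_span_support)
    fix v r s assume nin: "(v, r, s) \<notin> (SIGMA v:{1..n}. {..<dimv Y v} \<times> {..<dimv X v})"
    have b: "bounded_matr (dimv Y v) (dimv X v) (h v)" using h by (simp add: Hom_def)
    show "h v r s = 0"
    proof (cases "v \<in> {1..n}")
      case True
      then show ?thesis using nin b by (auto simp: bounded_matr_def)
    next
      case False
      then have "dimv Y v = 0" using rep_dim_out[OF Y] by simp
      then show ?thesis using b by (auto simp: bounded_matr_def)
    qed
  qed auto
qed

lemma Hom_finite_span:
  assumes X: "is_rep n N X" and Y: "is_rep n N Y"
  shows "\<exists>T. finite T \<and> Hom n N X Y \<subseteq> G.span T"
proof (intro exI conjI)
  show "finite (gunit ` (SIGMA v:{1..n}. {..<dimv Y v} \<times> {..<dimv X v}))" by auto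
qed (rule Hom_span[OF X Y])

lemma G_indep_single: "(h :: 'a \<Rightarrow> 'k::field matr) \<noteq> 0 \<Longrightarrow> G.independent {h}"
  by (subst G.independent_insert) (simp add: G.independent_empty)

lemma hom_dim_pos:
  assumes X: "is_rep n N X" and Y: "is_rep n N Y" and h: "h \<in> Hom n N X Y" "h \<noteq> 0"
  shows "1 \<le> hom_dim n N X Y"
proof -
  obtain T where T: "finite T" "Hom n N X Y \<subseteq> G.span T" using Hom_finite_span[OF X Y] by blast
  have "card {h} \<le> G.dim (Hom n N X Y)"
    by (rule G_dim_ge[OF _ G_indep_single[OF h(2)] T(2) T(1)]) (use h in auto)
  then show ?thesis by (simp add: hom_dim_G)
qed

lemma idh_Hom:
  assumes X: "is_rep n N X"
  shows "idh X \<in> Hom n N X X"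
  unfolding Hom_def idh_def mem_Collect_eq
proof (intro conjI allI ballI)
  fix v show "bounded_matr (dimv X v) (dimv X v) (idm (dimv X v))" by (rule idm_bounded)
next
  fix \<alpha> :: arr
  show "mmul (dimv X (src \<alpha>)) (mapv X \<alpha>) (idm (dimv X (src \<alpha>))) =
        mmul (dimv X (tgt \<alpha>)) (idm (dimv X (tgt \<alpha>))) (mapv X \<alpha>)"
    by (simp add: mmul_idl[OF rep_bnd[OF X]] mmul_idr[OF rep_bnd[OF X]])
qed

lemma idh_nz:
  assumes "nonzero_rep X"
  shows "idh X \<noteq> 0"
proof
  assume a: "idh X = 0"
  obtain v where v: "0 < dimv X v" using assms unfolding nonzero_rep_def by blast
  have "idh X v 0 0 = 1" unfolding idh_def idm_def using v by simp
  moreover have "idh X v 0 0 = 0" unfolding a by simp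
  ultimately show False by simp
qed

lemma brick_scalar:
  assumes X: "is_rep n N X" and nz: "nonzero_rep X" and b: "hom_dim n N X X = 1"
    and h: "h \<in> Hom n N X X"
  shows "\<exists>c. \<forall>v r s. h v r s = c * idm (dimv X v) r s"
proof -
  have "h \<in> G.span {idh X}"
  proof (rule ccontr)
    assume nsp: "h \<notin> G.span {idh X}"
    have hne: "h \<noteq> idh X" using nsp G.span_base[of "idh X" "{idh X}"] by auto
    have ind: "G.independent (insert h {idh X})"
      by (subst G.independent_insert) (simp add: hne nsp G_indep_single[OF idh_nz[OF nz]] idh_nz[OF nz])
    obtain T where T: "finite T" "Hom n N X X \<subseteq> G.span T" using Hom_finite_span[OF X X] by blast
    have "card (insert h {idh X}) \<le> G.dim (Hom n N X X)"
      by (rule G_dim_ge[OF _ ind T(2) T(1)]) (use h idh_Hom[OF X] in auto)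
    with hne b show False by (simp add: hom_dim_G)
  qed
  then obtain c where "h = gsc c (idh X)" unfolding G.span_singleton by blast
  then show ?thesis by (simp add: idh_def)
qed

lemma cob_bnd:
  assumes X: "is_rep n N X" and Y: "is_rep n N Y"
    and h: "\<forall>v. bounded_matr (dimv Y v) (dimv X v) (h v)"
  shows "bounded_matr (dimv Y (tgt \<alpha>)) (dimv X (src \<alpha>))
     (mmul (dimv Y (src \<alpha>)) (mapv Y \<alpha>) (h (src \<alpha>)) - mmul (dimv X (tgt \<alpha>)) (h (tgt \<alpha>)) (mapv X \<alpha>))"
proof -
  have 1: "bounded_matr (dimv Y (tgt \<alpha>)) (dimv X (src \<alpha>)) (mmul (dimv Y (src \<alpha>)) (mapv Y \<alpha>) (h (src \<alpha>)))"
    by (rule mmul_bounded[OF rep_bnd[OF Y]]) (use h in auto)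
  have 2: "bounded_matr (dimv Y (tgt \<alpha>)) (dimv X (src \<alpha>)) (mmul (dimv X (tgt \<alpha>)) (h (tgt \<alpha>)) (mapv X \<alpha>))"
    by (rule mmul_bounded[OF _ rep_bnd[OF X]]) (use h in auto)
  show ?thesis using 1 2 by (auto simp: bounded_matr_def)
qed

definition FE :: "nat \<Rightarrow> (nat \<Rightarrow> nat) \<Rightarrow> 'k rep \<Rightarrow> 'k rep \<Rightarrow> (arr \<times> nat \<times> nat) set" where
  "FE n N X Y = (SIGMA \<alpha>:arrows n N. {..<dimv Y (tgt \<alpha>)} \<times> {..<dimv X (src \<alpha>)})"

lemma FE_finite: "finite (FE n N X Y)"
  unfolding FE_def using finite_arrows by auto

lemma bnd_span:
  assumes "\<forall>\<alpha>. \<alpha> \<notin> arrows n N \<longrightarrow> f \<alpha> = 0"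
    and "\<forall>\<alpha>\<in>arrows n N. bounded_matr (dimv Y (tgt \<alpha>)) (dimv X (src \<alpha>)) (f \<alpha>)"
  shows "(f :: arr \<Rightarrow> 'k::field matr) \<in> G.span (gunit ` FE n N X Y)"
proof (rule G_span_support[OF FE_finite])
  fix a r s assume "(a, r, s) \<notin> FE n N X Y"
  then show "f a r s = 0" using assms by (cases "a \<in> arrows n N") (auto simp: FE_def bounded_matr_def)
qed

lemma Z_span: "Ext_cocycles n N X Y \<subseteq> G.span (gunit ` FE n N X Y)"
  unfolding Ext_cocycles_def using bnd_span by blast

lemma B_span:
  assumes X: "is_rep n N X" and Y: "is_rep n N Y"
  shows "Ext_coboundaries n N X Y \<subseteq> G.span (gunit ` FE n N X Y)"
proof
  fix f assume "f \<in> Ext_coboundaries n N X Y"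
  then obtain h where h: "\<forall>v. bounded_matr (dimv Y v) (dimv X v) (h v)"
    and f: "f = (\<lambda>\<alpha>. if \<alpha> \<in> arrows n N
               then mmul (dimv Y (src \<alpha>)) (mapv Y \<alpha>) (h (src \<alpha>)) - mmul (dimv X (tgt \<alpha>)) (h (tgt \<alpha>)) (mapv X \<alpha>)
               else 0)" unfolding Ext_coboundaries_def by blast
  show "f \<in> G.span (gunit ` FE n N X Y)"
    by (rule bnd_span) (auto simp: f cob_bnd[OF X Y h])
qed

lemma ext_le_Z: "ext1_dim n N X Y \<le> G.dim (Ext_cocycles n N X Y)"
  by (simp add: ext1_dim_G)

lemma ext_zero_noarrows:
  assumes "\<forall>\<alpha>\<in>arrows n N. dimv X (src \<alpha>) = 0 \<or> dimv Y (tgt \<alpha>) = 0"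
  shows "ext1_dim n N X Y = 0"
proof -
  have "Ext_cocycles n N X Y \<subseteq> G.span {}"
  proof
    fix f assume f: "f \<in> Ext_cocycles n N X Y"
    have "f \<alpha> r s = 0" for \<alpha> r s
    proof (cases "\<alpha> \<in> arrows n N")
      case True
      then have b: "bounded_matr (dimv Y (tgt \<alpha>)) (dimv X (src \<alpha>)) (f \<alpha>)"
        using f True unfolding Ext_cocycles_def mem_Collect_eq by simp
      from bspec[OF assms True] have "dimv X (src \<alpha>) = 0 \<or> dimv Y (tgt \<alpha>) = 0" .
      then have "f \<alpha> = 0"
      proof
        assume "dimv X (src \<alpha>) = 0" then show ?thesis using b bnd_zero_dim(2) by metis
      next
        assume "dimv Y (tgt \<alpha>) = 0" then show ?thesis using b bnd_zero_dim(1) by metis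
      qed
      then show ?thesis by simp
    next
      case False
      then show ?thesis using f unfolding Ext_cocycles_def by simp
    qed
    then have "f = 0" by (simp add: fun_eq_iff)
    then show "f \<in> G.span {}" by simp
  qed
  from G.dim_le_card[OF this finite.emptyI] ext_le_Z[of n N X Y] show ?thesis by simp
qed

lemma ext_zero_ZB:
  assumes X: "is_rep n N X" and Y: "is_rep n N Y"
    and sub: "Ext_cocycles n N X Y \<subseteq> Ext_coboundaries n N X Y"
  shows "ext1_dim n N X Y = 0"
  using G_dim_mono[OF sub B_span[OF X Y] finite_imageI[OF FE_finite]]
  by (simp add: ext1_dim_G)

definition vsc :: "'k::field \<Rightarrow> (nat \<Rightarrow> 'k) \<Rightarrow> (nat \<Rightarrow> 'k)" where
  "vsc c u = (\<lambda>l. c * u l)"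

lemma vs_vsc: "vector_space vsc"
  by unfold_locales (auto simp: vsc_def fun_eq_iff algebra_simps)

interpretation V: vector_space vsc by (rule vs_vsc)
interpretation VP: vector_space_pair vsc vsc by unfold_locales

definition delta :: "nat \<Rightarrow> nat \<Rightarrow> 'k::field" where
  "delta r = (\<lambda>k. if k = r then 1 else 0)"

lemma left_inverse:
  fixes A :: "'k::field matr"
  assumes bA: "bounded_matr p q A"
    and inj: "\<And>u. (\<And>r. (\<Sum>l<q. A r l * u l) = 0) \<Longrightarrow> \<forall>l<q. u l = 0"
  shows "\<exists>L. bounded_matr q p L \<and> mmul p L A = idm q"
proof -
  define W where "W = {u :: nat \<Rightarrow> 'k. \<forall>l. q \<le> l \<longrightarrow> u l = 0}"
  have subW: "V.subspace W" unfolding V.subspace_def W_def by (auto simp: vsc_def)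
  have spW: "V.span W = W" using subW by simp
  define f where "f = (\<lambda>u::nat\<Rightarrow>'k. \<lambda>r. \<Sum>l<q. A r l * u l)"
  have lf: "Vector_Spaces.linear vsc vsc f"
    unfolding Vector_Spaces.linear_iff
  proof (intro conjI allI)
    show "vector_space vsc" by (rule vs_vsc)
    show "vector_space vsc" by (rule vs_vsc)
    fix x y :: "nat \<Rightarrow> 'k"
    show "f (x + y) = f x + f y" by (simp add: f_def fun_eq_iff sum.distrib algebra_simps)
  next
    fix c :: 'k and x :: "nat \<Rightarrow> 'k"
    show "f (vsc c x) = vsc c (f x)" by (simp add: f_def vsc_def fun_eq_iff sum_distrib_left algebra_simps)
  qed
  have injf: "inj_on f (V.span W)"
    unfolding spW
  proof (rule inj_onI)
    fix x y assume x: "x \<in> W" and y: "y \<in> W" and e: "f x = f y"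
    have "\<forall>l<q. (x - y) l = 0"
    proof (rule inj)
      fix r
      have "f x r = f y r" using e by simp
      then show "(\<Sum>l<q. A r l * (x - y) l) = 0"
        by (simp add: f_def algebra_simps sum_subtractf)
    qed
    then have a: "\<And>l. l < q \<Longrightarrow> x l = y l" by simp
    have b: "\<And>l. \<not> l < q \<Longrightarrow> x l = y l" using x y unfolding W_def by simp
    show "x = y"
    proof (rule ext)
      fix l show "x l = y l" using a b by (cases "l < q") auto
    qed
  qed
  obtain g where g: "Vector_Spaces.linear vsc vsc g" "\<forall>x\<in>V.span W. g (f x) = x"
    using VP.linear_inj_on_left_inverse[OF lf injf] by blast
  have mh: "Modules.module_hom vsc vsc g" using g(1) by (simp add: module_hom_iff_linear)
  define L where "L = (\<lambda>l r. if l < q \<and> r < p then g (delta r) l else 0)"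
  have bL: "bounded_matr q p L" by (auto simp: L_def bounded_matr_def)
  have "mmul p L A l s = idm q l s" for l s
  proof (cases "l < q \<and> s < q")
    case False
    then have "\<not> l < q \<or> \<not> s < q" by simp
    then show ?thesis
    proof
      assume "\<not> l < q"
      then show ?thesis by (simp add: mmul_def L_def idm_def)
    next
      assume "\<not> s < q"
      then have "\<And>r. A r s = 0" using bA by (auto simp: bounded_matr_def)
      then show ?thesis using \<open>\<not> s < q\<close> by (simp add: mmul_def idm_def)
    qed
  next
    case True
    have "mmul p L A l s = (\<Sum>r<p. g (delta r) l * A r s)"
      unfolding mmul_def L_def using True by (intro sum.cong) auto
    also have "\<dots> = (\<Sum>r<p. vsc (A r s) (g (delta r))) l"
      by (simp add: sum_fun_app vsc_def mult.commute)
    also have "\<dots> = g (\<Sum>r<p. vsc (A r s) (delta r)) l"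
      by (simp add: Modules.module_hom.sum[OF mh] Modules.module_hom.scale[OF mh])
    also have "(\<Sum>r<p. vsc (A r s) (delta r)) = f (delta s)"
    proof (rule ext)
      fix k
      have "(\<Sum>r<p. vsc (A r s) (delta r)) k = (\<Sum>r<p. if r = k then A k s else 0)"
        unfolding sum_fun_app vsc_def delta_def by (intro sum.cong) auto
      also have "\<dots> = A k s" using bA by (simp add: sum.delta bounded_matr_def)
      also have "\<dots> = (\<Sum>l<q. if l = s then A k l else 0)" using True by (simp add: sum.delta)
      also have "\<dots> = f (delta s) k" unfolding f_def delta_def by (intro sum.cong) auto
      finally show "(\<Sum>r<p. vsc (A r s) (delta r)) k = f (delta s) k" .
    qed
    also have "g (f (delta s)) = delta s"
      using g(2) True unfolding spW by (auto simp: W_def delta_def)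
    finally show ?thesis using True by (simp add: delta_def idm_def)
  qed
  then have "mmul p L A = idm q" by (simp add: fun_eq_iff)
  with bL show ?thesis by blast
qed

lemma bounded_zero[simp]: "bounded_matr p q 0"
  by (simp add: bounded_matr_def)

lemma arrows_cases:
  assumes "\<alpha> \<in> arrows n N"
  obtains m where "\<alpha> = ArrX m" "2 \<le> m" "m \<le> n" | i j where "\<alpha> = Loop i j"
  using assms unfolding arrows_def by blast

lemma endo_crit:
  assumes bnd: "\<And>v. bounded_matr (dimv X v) (dimv X v) (h v)"
    and eq: "\<And>\<alpha>. \<alpha> \<in> arrows n N \<Longrightarrow> mmul (dimv X (src \<alpha>)) (mapv X \<alpha>) (h (src \<alpha>)) = mmul (dimv X (tgt \<alpha>)) (h (tgt \<alpha>)) (mapv X \<alpha>)"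
  shows "h \<in> Hom n N X X"
  unfolding Hom_def mem_Collect_eq using bnd eq by blast

lemma comm_triv:
  assumes "mapv X \<alpha> = 0 \<or> (h (src \<alpha>) = 0 \<and> h (tgt \<alpha>) = 0)"
  shows "mmul (dimv X (src \<alpha>)) (mapv X \<alpha>) (h (src \<alpha>)) = mmul (dimv X (tgt \<alpha>)) (h (tgt \<alpha>)) (mapv X \<alpha>)"
  using assms by auto

definition e00 :: "'k::comm_ring_1 \<Rightarrow> 'k matr" where
  "e00 a = (\<lambda>r s. if r = 0 \<and> s = 0 then a else 0)"

definition Srep :: "nat \<Rightarrow> 'k::comm_ring_1 rep" where
  "Srep i = \<lparr>dimv = (\<lambda>v. if v = i then 1 else 0), mapv = (\<lambda>_. 0)\<rparr>"

definition Brep :: "nat \<Rightarrow> 'k::comm_ring_1 \<Rightarrow> 'k rep" where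
  "Brep i a = \<lparr>dimv = (\<lambda>v. if v = i \<or> v = Suc i then 1 else 0),
     mapv = (\<lambda>\<alpha>. if \<alpha> = ArrX (Suc i) then e00 a else 0)\<rparr>"

lemma ArrX_in: "ArrX m \<in> arrows n N \<longleftrightarrow> 2 \<le> m \<and> m \<le> n"
  by (auto simp: arrows_def)

lemma e00_bounded: "1 \<le> p \<Longrightarrow> 1 \<le> q \<Longrightarrow> bounded_matr p q (e00 a)"
  by (auto simp: e00_def bounded_matr_def)

context
  fixes n :: nat and N :: "nat \<Rightarrow> nat" and X :: "'k::field rep"
  assumes X: "is_rep n N X" and nz: "nonzero_rep X" and br: "hom_dim n N X X = 1"
begin

lemma SE: "h \<in> Hom n N X X \<Longrightarrow> \<exists>c. \<forall>v r s. h v r s = c * idm (dimv X v) r s"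
  using brick_scalar[OF X nz br] by blast

lemma loops_zero: "mapv X (Loop i j) = 0"
proof (cases "Loop i j \<in> arrows n N")
  case False
  then show ?thesis using rep_map_out[OF X] by blast
next
  case True
  define G where "G = mapv X (Loop i j)"
  define h where "h = (\<lambda>v. if v = i then G else 0)"
  have bG: "bounded_matr (dimv X i) (dimv X i) G" using rep_bnd[OF X, of "Loop i j"] by (simp add: G_def)
  have hH: "h \<in> Hom n N X X"
  proof (rule endo_crit)
    fix v show "bounded_matr (dimv X v) (dimv X v) (h v)" using bG by (simp add: h_def)
  next
    fix \<alpha> assume a: "\<alpha> \<in> arrows n N"
    have L: "mmul (dimv X (src \<alpha>)) (mapv X \<alpha>) (h (src \<alpha>)) = 0"
    proof (cases "src \<alpha> = i")
      case T: True
      have "mmul (dimv X (src \<alpha>)) (mapv X \<alpha>) (mapv X (Loop i j)) = 0"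
        by (rule rep_rel[OF X True a]) (simp add: T)
      then show ?thesis using T by (simp add: h_def G_def)
    next
      case False then show ?thesis by (simp add: h_def)
    qed
    have R: "mmul (dimv X (tgt \<alpha>)) (h (tgt \<alpha>)) (mapv X \<alpha>) = 0"
    proof (cases "tgt \<alpha> = i")
      case T: True
      have "mmul (dimv X (src (Loop i j))) (mapv X (Loop i j)) (mapv X \<alpha>) = 0"
        by (rule rep_rel[OF X a True]) (simp add: T)
      then show ?thesis using T by (simp add: h_def G_def)
    next
      case False then show ?thesis by (simp add: h_def)
    qed
    show "mmul (dimv X (src \<alpha>)) (mapv X \<alpha>) (h (src \<alpha>)) = mmul (dimv X (tgt \<alpha>)) (h (tgt \<alpha>)) (mapv X \<alpha>)"
      using L R by simp
  qed
  obtain c where c: "\<forall>v r s. h v r s = c * idm (dimv X v) r s" using SE[OF hH] by blast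
  have Gc: "G r s = c * idm (dimv X i) r s" for r s using c[rule_format, of i r s] by (simp add: h_def)
  have GG: "mmul (dimv X i) G G = 0" using rep_rel[OF X True True] by (simp add: G_def)
  show ?thesis
  proof (cases "dimv X i = 0")
    case True
    then have "G = 0" using bG bnd_zero_dim(1) by metis
    then show ?thesis by (simp add: G_def)
  next
    case False
    have "mmul (dimv X i) G G 0 0 = (\<Sum>l<dimv X i. if l = 0 then c * c else 0)"
      unfolding mmul_def Gc idm_def by (intro sum.cong) auto
    also have "\<dots> = c * c" using False by (simp add: sum.delta)
    finally have "c * c = 0" using GG by simp
    then have "c = 0" by simp
    then have "G = 0" using Gc by (simp add: fun_eq_iff)
    then show ?thesis by (simp add: G_def)
  qed
qed

lemma brick_class:
  "(\<exists>i. 1 \<le> i \<and> i \<le> n \<and> X = Srep i) \<or> (\<exists>i a. 1 \<le> i \<and> Suc i \<le> n \<and> a \<noteq> 0 \<and> X = Brep i a)"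
proof -
  obtain v0 where v0: "0 < dimv X v0" using nz unfolding nonzero_rep_def by blast
  define i where "i = (LEAST v. 0 < dimv X v)"
  have di: "0 < dimv X i" unfolding i_def by (rule LeastI[of _ v0]) (rule v0)
  have below: "dimv X v = 0" if "v < i" for v
    using not_less_Least[OF that[unfolded i_def]] by simp
  have i1: "1 \<le> i" "i \<le> n"
  proof -
    have "i \<in> {1..n}"
    proof (rule ccontr)
      assume "i \<notin> {1..n}"
      then have "dimv X i = 0" by (rule rep_dim_out[OF X])
      with di show False by simp
    qed
    then show "1 \<le> i" "i \<le> n" by auto
  qed
  have Mi: "mapv X (ArrX i) = 0"
  proof -
    have "bounded_matr (dimv X i) (dimv X (i - 1)) (mapv X (ArrX i))"
      using rep_bnd[OF X, of "ArrX i"] by simp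
    moreover have "dimv X (i - 1) = 0" by (rule below) (use i1 in simp)
    ultimately show ?thesis using bnd_zero_dim(2) by metis
  qed
  define A where "A = mapv X (ArrX (Suc i))"
  have bA: "bounded_matr (dimv X (Suc i)) (dimv X i) A"
    using rep_bnd[OF X, of "ArrX (Suc i)"] by (simp add: A_def)
  show ?thesis
  proof (cases "A = 0")
    case A0: True
    define e where "e = (\<lambda>v. if v = i then idm (dimv X i) else (0::'k matr))"
    have eH: "e \<in> Hom n N X X"
    proof (rule endo_crit)
      fix v show "bounded_matr (dimv X v) (dimv X v) (e v)" by (simp add: e_def idm_bounded)
    next
      fix \<alpha> assume a: "\<alpha> \<in> arrows n N"
      show "mmul (dimv X (src \<alpha>)) (mapv X \<alpha>) (e (src \<alpha>)) = mmul (dimv X (tgt \<alpha>)) (e (tgt \<alpha>)) (mapv X \<alpha>)"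
      proof (rule comm_triv)
        from a show "mapv X \<alpha> = 0 \<or> e (src \<alpha>) = 0 \<and> e (tgt \<alpha>) = 0"
        proof (cases rule: arrows_cases)
          case (1 m)
          show ?thesis
          proof (cases "m = Suc i \<or> m = i")
            case True
            then show ?thesis using A0 Mi 1 by (auto simp: A_def)
          next
            case False
            then have "m - 1 \<noteq> i" using 1 by auto
            then show ?thesis using False 1 by (simp add: e_def)
          qed
        next
          case (2 i' j)
          then show ?thesis using loops_zero by simp
        qed
      qed
    qed
    obtain c where c: "\<forall>v r s. e v r s = c * idm (dimv X v) r s" using SE[OF eH] by blast
    have c1: "c = 1" using c[rule_format, of i 0 0] di by (simp add: e_def idm_def)
    have only: "dimv X v = 0" if "v \<noteq> i" for v
    proof (rule ccontr)
      assume "dimv X v \<noteq> 0"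
      then have "idm (dimv X v) 0 0 = (1::'k)" by (simp add: idm_def)
      with c[rule_format, of v 0 0] c1 that show False by (simp add: e_def)
    qed
    have allzero: "mapv X \<alpha> = 0" for \<alpha>
    proof (cases "\<alpha> \<in> arrows n N")
      case False then show ?thesis using rep_map_out[OF X] by blast
    next
      case True
      then show ?thesis
      proof (cases rule: arrows_cases)
        case (1 m)
        show ?thesis
        proof (cases "m = i")
          case True then show ?thesis using Mi 1 by simp
        next
          case False
          then have "dimv X m = 0" by (rule only)
          moreover have "bounded_matr (dimv X m) (dimv X (m - 1)) (mapv X \<alpha>)"
            using rep_bnd[OF X, of \<alpha>] 1 by simp
          ultimately show ?thesis using bnd_zero_dim(1) by metis
        qed
      next
        case (2 i' j) then show ?thesis using loops_zero by simp
      qed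
    qed
    have d1: "dimv X i = 1"
    proof (rule ccontr)
      assume "dimv X i \<noteq> 1"
      with di have d2: "2 \<le> dimv X i" by simp
      define h where "h = (\<lambda>v. if v = i then e00 (1::'k) else 0)"
      have hH: "h \<in> Hom n N X X"
      proof (rule endo_crit)
        fix v show "bounded_matr (dimv X v) (dimv X v) (h v)"
          using d2 by (simp add: h_def e00_bounded)
      next
        fix \<alpha> assume "\<alpha> \<in> arrows n N"
        show "mmul (dimv X (src \<alpha>)) (mapv X \<alpha>) (h (src \<alpha>)) = mmul (dimv X (tgt \<alpha>)) (h (tgt \<alpha>)) (mapv X \<alpha>)"
          by (rule comm_triv) (simp add: allzero)
      qed
      obtain c' where c': "\<forall>v r s. h v r s = c' * idm (dimv X v) r s" using SE[OF hH] by blast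
      have "c' = 1" using c'[rule_format, of i 0 0] d2 by (simp add: h_def e00_def idm_def)
      moreover have "c' = 0" using c'[rule_format, of i 1 1] d2 by (simp add: h_def e00_def idm_def)
      ultimately show False by simp
    qed
    have "X = Srep i"
    proof (rule rep.equality)
      show "dimv X = dimv (Srep i)"
      proof (rule ext)
        fix v show "dimv X v = dimv (Srep i) v"
          using only d1 by (cases "v = i") (simp_all add: Srep_def)
      qed
      show "mapv X = mapv (Srep i)" using allzero by (simp add: Srep_def fun_eq_iff)
    qed simp
    then show ?thesis using i1 by blast
  next
    case AN: False
    have Si: "Suc i \<le> n"
    proof (rule ccontr)
      assume "\<not> Suc i \<le> n"
      then have "ArrX (Suc i) \<notin> arrows n N" by (simp add: ArrX_in)
      then have "A = 0" unfolding A_def by (rule rep_map_out[OF X])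
      with AN show False by simp
    qed
    have aS: "ArrX (Suc i) \<in> arrows n N" using Si i1 by (simp add: ArrX_in)
    have dS: "0 < dimv X (Suc i)"
    proof (rule ccontr)
      assume "\<not> 0 < dimv X (Suc i)"
      then have "dimv X (Suc i) = 0" by simp
      then have "A = 0" using bA bnd_zero_dim(1) by metis
      with AN show False by simp
    qed
    obtain r0 s0 where A0: "A r0 s0 \<noteq> 0" using AN by (auto simp: fun_eq_iff)
    have r0: "r0 < dimv X (Suc i)" and s0: "s0 < dimv X i"
      using A0 bA by (auto simp: bounded_matr_def not_less[symmetric])
    define Bm where "Bm = mapv X (ArrX (Suc (Suc i)))"
    have bB: "bounded_matr (dimv X (Suc (Suc i))) (dimv X (Suc i)) Bm"
      using rep_bnd[OF X, of "ArrX (Suc (Suc i))"] by (simp add: Bm_def)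
    have BA: "mmul (dimv X (Suc i)) Bm A = 0"
    proof (cases "ArrX (Suc (Suc i)) \<in> arrows n N")
      case True
      have "mmul (dimv X (src (ArrX (Suc (Suc i))))) (mapv X (ArrX (Suc (Suc i)))) (mapv X (ArrX (Suc i))) = 0"
        by (rule rep_rel[OF X aS True]) simp
      then show ?thesis by (simp add: A_def Bm_def)
    next
      case False
      then have "Bm = 0" unfolding Bm_def by (rule rep_map_out[OF X])
      then show ?thesis by simp
    qed
    have inj: "\<forall>l<dimv X i. u l = 0" if hu: "\<And>r. (\<Sum>l<dimv X i. A r l * u l) = 0" for u
    proof -
      define h where "h = (\<lambda>v. if v = i then (\<lambda>r s. if s = 0 \<and> r < dimv X i then u r else 0) else (0::'k matr))"
      have hH: "h \<in> Hom n N X X"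
      proof (rule endo_crit)
        fix v show "bounded_matr (dimv X v) (dimv X v) (h v)"
          using di by (auto simp: h_def bounded_matr_def)
      next
        fix \<alpha> assume a: "\<alpha> \<in> arrows n N"
        then show "mmul (dimv X (src \<alpha>)) (mapv X \<alpha>) (h (src \<alpha>)) = mmul (dimv X (tgt \<alpha>)) (h (tgt \<alpha>)) (mapv X \<alpha>)"
        proof (cases rule: arrows_cases)
          case (1 m)
          show ?thesis
          proof (cases "m = Suc i")
            case True
            have "mmul (dimv X i) A (h i) = 0"
            proof (intro ext)
              fix r s
              show "mmul (dimv X i) A (h i) r s = 0 r s"
              proof (cases "s = 0")
                case True
                have "mmul (dimv X i) A (h i) r s = (\<Sum>l<dimv X i. A r l * u l)"
                  unfolding mmul_def h_def using True by (intro sum.cong) auto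
                then show ?thesis using hu by simp
              next
                case False then show ?thesis by (simp add: mmul_def h_def)
              qed
            qed
            then show ?thesis using True 1 by (simp add: A_def h_def)
          next
            case False
            show ?thesis
            proof (rule comm_triv)
              show "mapv X \<alpha> = 0 \<or> h (src \<alpha>) = 0 \<and> h (tgt \<alpha>) = 0"
              proof (cases "m = i")
                case True then show ?thesis using Mi 1 by simp
              next
                case F2: False
                have "m - 1 \<noteq> i" using 1 False by auto
                then show ?thesis using F2 1 by (simp add: h_def)
              qed
            qed
          qed
        next
          case (2 i' j) then show ?thesis by (intro comm_triv) (simp add: loops_zero)
        qed
      qed
      obtain c where c: "\<forall>v r s. h v r s = c * idm (dimv X v) r s" using SE[OF hH] by blast
      have "c = 0" using c[rule_format, of "Suc i" 0 0] dS by (simp add: h_def idm_def)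
      have "u l = 0" if "l < dimv X i" for l
        using c[rule_format, of i l 0] that \<open>c = 0\<close> by (simp add: h_def)
      then show ?thesis by blast
    qed
    have coinj: "\<forall>r<dimv X (Suc i). w r = 0" if hw: "\<And>s. (\<Sum>r<dimv X (Suc i). w r * A r s) = 0" for w
    proof -
      define h where "h = (\<lambda>v. if v = Suc i then (\<lambda>r s. if r < dimv X (Suc i) \<and> s < dimv X (Suc i) then A r s0 * w s else 0) else (0::'k matr))"
      have hH: "h \<in> Hom n N X X"
      proof (rule endo_crit)
        fix v show "bounded_matr (dimv X v) (dimv X v) (h v)"
          by (auto simp: h_def bounded_matr_def)
      next
        fix \<alpha> assume a: "\<alpha> \<in> arrows n N"
        then show "mmul (dimv X (src \<alpha>)) (mapv X \<alpha>) (h (src \<alpha>)) = mmul (dimv X (tgt \<alpha>)) (h (tgt \<alpha>)) (mapv X \<alpha>)"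
        proof (cases rule: arrows_cases)
          case (1 m)
          show ?thesis
          proof (cases "m = Suc i")
            case True
            have "mmul (dimv X (Suc i)) (h (Suc i)) A = 0"
            proof (intro ext)
              fix r s
              have "mmul (dimv X (Suc i)) (h (Suc i)) A r s
                  = (if r < dimv X (Suc i) then A r s0 * (\<Sum>l<dimv X (Suc i). w l * A l s) else 0)"
                unfolding mmul_def h_def by (auto simp: sum_distrib_left mult.assoc intro!: sum.cong)
              then show "mmul (dimv X (Suc i)) (h (Suc i)) A r s = 0 r s" using hw by simp
            qed
            then show ?thesis using True 1 by (simp add: A_def h_def)
          next
            case F1: False
            show ?thesis
            proof (cases "m = Suc (Suc i)")
              case True
              have "mmul (dimv X (Suc i)) Bm (h (Suc i)) = 0"
              proof (intro ext)
                fix r s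
                have "mmul (dimv X (Suc i)) Bm (h (Suc i)) r s
                    = (if s < dimv X (Suc i) then mmul (dimv X (Suc i)) Bm A r s0 * w s else 0)"
                  unfolding mmul_def h_def by (auto simp: sum_distrib_right mult.assoc intro!: sum.cong)
                then show "mmul (dimv X (Suc i)) Bm (h (Suc i)) r s = 0 r s" using BA by simp
              qed
              then show ?thesis using True 1 by (simp add: Bm_def h_def)
            next
              case F2: False
              show ?thesis
              proof (rule comm_triv)
                show "mapv X \<alpha> = 0 \<or> h (src \<alpha>) = 0 \<and> h (tgt \<alpha>) = 0"
                proof (cases "m = i")
                  case True then show ?thesis using Mi 1 by simp
                next
                  case F3: False
                  have "m - 1 \<noteq> Suc i" using 1 F2 by auto
                  then show ?thesis using F1 1 by (simp add: h_def)
                qed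
              qed
            qed
          qed
        next
          case (2 i' j) then show ?thesis by (intro comm_triv) (simp add: loops_zero)
        qed
      qed
      obtain c where c: "\<forall>v r s. h v r s = c * idm (dimv X v) r s" using SE[OF hH] by blast
      have "c = 0" using c[rule_format, of i 0 0] di by (simp add: h_def idm_def)
      then have "A r0 s0 * w s = 0" if "s < dimv X (Suc i)" for s
        using c[rule_format, of "Suc i" r0 s] r0 that by (simp add: h_def)
      then show ?thesis using A0 by simp
    qed
    have B0: "Bm = 0"
    proof (intro ext)
      fix r l
      show "Bm r l = 0 r l"
      proof (cases "l < dimv X (Suc i)")
        case True
        have "\<forall>l<dimv X (Suc i). Bm r l = 0"
        proof (rule coinj)
          fix s show "(\<Sum>l<dimv X (Suc i). Bm r l * A l s) = 0"
            using fun_cong[OF fun_cong[OF BA, of r], of s] by (simp add: mmul_def)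
        qed
        then show ?thesis using True by simp
      next
        case False then show ?thesis using bB by (simp add: bounded_matr_def)
      qed
    qed
    have eH: "(\<lambda>v. if v = i \<or> v = Suc i then idm (dimv X v) else (0::'k matr)) \<in> Hom n N X X"
      (is "?e \<in> _")
    proof (rule endo_crit)
      fix v show "bounded_matr (dimv X v) (dimv X v) (?e v)" by (simp add: idm_bounded)
    next
      fix \<alpha> assume a: "\<alpha> \<in> arrows n N"
      then show "mmul (dimv X (src \<alpha>)) (mapv X \<alpha>) (?e (src \<alpha>)) = mmul (dimv X (tgt \<alpha>)) (?e (tgt \<alpha>)) (mapv X \<alpha>)"
      proof (cases rule: arrows_cases)
        case (1 m)
        show ?thesis
        proof (cases "m = Suc i")
          case True
          then show ?thesis using 1 mmul_idr[OF bA] mmul_idl[OF bA] by (simp add: A_def)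
        next
          case F1: False
          show ?thesis
          proof (rule comm_triv)
            show "mapv X \<alpha> = 0 \<or> ?e (src \<alpha>) = 0 \<and> ?e (tgt \<alpha>) = 0"
            proof (cases "m = i \<or> m = Suc (Suc i)")
              case True then show ?thesis using Mi B0 1 by (auto simp: Bm_def)
            next
              case F2: False
              have "m - 1 \<noteq> i" "m - 1 \<noteq> Suc i" using 1 F1 F2 by auto
              then show ?thesis using F1 F2 1 by simp
            qed
          qed
        qed
      next
        case (2 i' j) then show ?thesis by (intro comm_triv) (simp add: loops_zero)
      qed
    qed
    obtain c where c: "\<forall>v r s. ?e v r s = c * idm (dimv X v) r s" using SE[OF eH] by blast
    have c1: "c = 1" using c[rule_format, of i 0 0] di by (simp add: idm_def)
    have only: "dimv X v = 0" if "v \<noteq> i" "v \<noteq> Suc i" for v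
    proof (rule ccontr)
      assume "dimv X v \<noteq> 0"
      then have "idm (dimv X v) 0 0 = (1::'k)" by (simp add: idm_def)
      with c[rule_format, of v 0 0] c1 that show False by simp
    qed
    obtain L where bL: "bounded_matr (dimv X i) (dimv X (Suc i)) L"
      and LA: "mmul (dimv X (Suc i)) L A = idm (dimv X i)"
      using left_inverse[OF bA inj] by blast
    have d1: "dimv X i = 1"
    proof (rule ccontr)
      assume "dimv X i \<noteq> 1"
      with di have d2: "2 \<le> dimv X i" by simp
      define E where "E = e00 (1::'k)"
      have bE: "bounded_matr (dimv X i) (dimv X i) E" using d2 by (simp add: E_def e00_bounded)
      have bAE: "bounded_matr (dimv X (Suc i)) (dimv X i) (mmul (dimv X i) A E)"
        by (rule mmul_bounded[OF bA bE])
      define h where "h = (\<lambda>v. if v = i then E else if v = Suc i then mmul (dimv X i) (mmul (dimv X i) A E) L else 0)"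
      have hH: "h \<in> Hom n N X X"
      proof (rule endo_crit)
        fix v show "bounded_matr (dimv X v) (dimv X v) (h v)"
          using bE mmul_bounded[OF bAE bL] by (simp add: h_def)
      next
        fix \<alpha> assume a: "\<alpha> \<in> arrows n N"
        then show "mmul (dimv X (src \<alpha>)) (mapv X \<alpha>) (h (src \<alpha>)) = mmul (dimv X (tgt \<alpha>)) (h (tgt \<alpha>)) (mapv X \<alpha>)"
        proof (cases rule: arrows_cases)
          case (1 m)
          show ?thesis
          proof (cases "m = Suc i")
            case True
            have "mmul (dimv X (Suc i)) (mmul (dimv X i) (mmul (dimv X i) A E) L) A
                = mmul (dimv X i) (mmul (dimv X i) A E) (mmul (dimv X (Suc i)) L A)"
              by (rule mmul_assoc)
            also have "\<dots> = mmul (dimv X i) A E" unfolding LA by (rule mmul_idr[OF bAE])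
            finally show ?thesis using True 1 by (simp add: h_def A_def)
          next
            case F1: False
            show ?thesis
            proof (rule comm_triv)
              show "mapv X \<alpha> = 0 \<or> h (src \<alpha>) = 0 \<and> h (tgt \<alpha>) = 0"
              proof (cases "m = i \<or> m = Suc (Suc i)")
                case True then show ?thesis using Mi B0 1 by (auto simp: Bm_def)
              next
                case F2: False
                have "m - 1 \<noteq> i" "m - 1 \<noteq> Suc i" using 1 F1 F2 by auto
                then show ?thesis using F1 F2 1 by (simp add: h_def)
              qed
            qed
          qed
        next
          case (2 i' j) then show ?thesis by (intro comm_triv) (simp add: loops_zero)
        qed
      qed
      obtain c' where c': "\<forall>v r s. h v r s = c' * idm (dimv X v) r s" using SE[OF hH] by blast
      have "c' = 1" using c'[rule_format, of i 0 0] d2 by (simp add: h_def E_def e00_def idm_def)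
      moreover have "c' = 0" using c'[rule_format, of i 1 1] d2 by (simp add: h_def E_def e00_def idm_def)
      ultimately show False by simp
    qed
    have Abnd: "A r s = 0" if "1 \<le> s" for r s using bA d1 that by (simp add: bounded_matr_def)
    have dS1: "dimv X (Suc i) = 1"
    proof (rule ccontr)
      assume "dimv X (Suc i) \<noteq> 1"
      with dS have d2: "2 \<le> dimv X (Suc i)" by simp
      define w where "w = (\<lambda>r::nat. if r = 0 then A 1 0 else if r = 1 then - A 0 0 else 0)"
      have "\<forall>r<dimv X (Suc i). w r = 0"
      proof (rule coinj)
        fix s
        have "(\<Sum>r<dimv X (Suc i). w r * A r s)
            = (\<Sum>r<dimv X (Suc i). (if r = 0 then A 1 0 * A 0 s else 0) + (if r = 1 then - A 0 0 * A 1 s else 0))"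
          unfolding w_def by (intro sum.cong) auto
        also have "\<dots> = A 1 0 * A 0 s - A 0 0 * A 1 s"
          using d2 by (simp add: sum.distrib sum.delta')
        also have "\<dots> = 0" using Abnd[of s] by (cases "s = 0") auto
        finally show "(\<Sum>r<dimv X (Suc i). w r * A r s) = 0" .
      qed
      then have "w 0 = 0" "w 1 = 0" using d2 by auto
      then have z: "A 0 0 = 0" by (simp_all add: w_def)
      have "\<forall>r<dimv X (Suc i). (if r = 0 then (1::'k) else 0) = 0"
      proof (rule coinj)
        fix s
        have "(\<Sum>r<dimv X (Suc i). (if r = 0 then (1::'k) else 0) * A r s)
            = (\<Sum>r<dimv X (Suc i). if r = 0 then A 0 s else 0)" by (intro sum.cong) auto
        also have "\<dots> = A 0 s" using d2 by (simp add: sum.delta)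
        also have "\<dots> = 0" using Abnd[of s] z by (cases "s = 0") auto
        finally show "(\<Sum>r<dimv X (Suc i). (if r = 0 then (1::'k) else 0) * A r s) = 0" .
      qed
      from this[rule_format, OF dS] show False by simp
    qed
    have a0: "A 0 0 \<noteq> 0" using A0 r0 s0 d1 dS1 by simp
    have "X = Brep i (A 0 0)"
    proof (rule rep.equality)
      show "dimv X = dimv (Brep i (A 0 0))"
      proof (rule ext)
        fix v show "dimv X v = dimv (Brep i (A 0 0)) v"
          using only[of v] d1 dS1 by (auto simp: Brep_def)
      qed
      show "mapv X = mapv (Brep i (A 0 0))"
      proof (rule ext)
        fix \<alpha>
        show "mapv X \<alpha> = mapv (Brep i (A 0 0)) \<alpha>"
        proof (cases "\<alpha> = ArrX (Suc i)")
          case True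
          have "A = e00 (A 0 0)"
            using bA d1 dS1 by (auto simp: e00_def bounded_matr_def fun_eq_iff)
          then show ?thesis using True by (simp add: Brep_def A_def)
        next
          case F: False
          have "mapv X \<alpha> = 0"
          proof (cases "\<alpha> \<in> arrows n N")
            case False then show ?thesis using rep_map_out[OF X] by blast
          next
            case True
            then show ?thesis
            proof (cases rule: arrows_cases)
              case (1 m)
              show ?thesis
              proof (cases "m = i")
                case True then show ?thesis using Mi 1 by simp
              next
                case False
                then have "dimv X m = 0" using F 1 by (intro only) auto
                moreover have "bounded_matr (dimv X m) (dimv X (m - 1)) (mapv X \<alpha>)"
                  using rep_bnd[OF X, of \<alpha>] 1 by simp
                ultimately show ?thesis using bnd_zero_dim(1) by metis
              qed
            next
              case (2 i' j) then show ?thesis using loops_zero by simp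
            qed
          qed
          then show ?thesis using F by (simp add: Brep_def)
        qed
      qed
    qed simp
    then show ?thesis using i1 Si a0 by blast
  qed
qed

end

lemma Srep_simps[simp]: "dimv (Srep i) v = (if v = i then 1 else 0)" "mapv (Srep i) \<alpha> = 0"
  by (simp_all add: Srep_def)

lemma Brep_simps[simp]: "dimv (Brep i a) v = (if v = i \<or> v = Suc i then 1 else 0)"
  "mapv (Brep i a) \<alpha> = (if \<alpha> = ArrX (Suc i) then e00 a else 0)"
  by (simp_all add: Brep_def)

definition lbl :: "'k::zero rep \<Rightarrow> nat" where
  "lbl X = (LEAST v. 0 < dimv X v)"

lemma lbl_S[simp]: "lbl (Srep i) = i"
  unfolding lbl_def by (rule Least_equality) (auto split: if_splits)

lemma lbl_B[simp]: "lbl (Brep i a) = i"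
  unfolding lbl_def by (rule Least_equality) (auto split: if_splits)

lemma hom_crit2:
  assumes "\<And>v. bounded_matr (dimv Y v) (dimv X v) (h v)"
    and "\<And>\<alpha>. \<alpha> \<in> arrows n N \<Longrightarrow> (mapv Y \<alpha> = 0 \<or> h (src \<alpha>) = 0) \<and> (mapv X \<alpha> = 0 \<or> h (tgt \<alpha>) = 0)"
  shows "h \<in> Hom n N X Y"
proof -
  have "mmul (dimv Y (src \<alpha>)) (mapv Y \<alpha>) (h (src \<alpha>)) = mmul (dimv X (tgt \<alpha>)) (h (tgt \<alpha>)) (mapv X \<alpha>)"
    if "\<alpha> \<in> arrows n N" for \<alpha>
  proof -
    have "mmul (dimv Y (src \<alpha>)) (mapv Y \<alpha>) (h (src \<alpha>)) = 0" using assms(2)[OF that] by auto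
    moreover have "mmul (dimv X (tgt \<alpha>)) (h (tgt \<alpha>)) (mapv X \<alpha>) = 0" using assms(2)[OF that] by auto
    ultimately show ?thesis by simp
  qed
  then show ?thesis unfolding Hom_def mem_Collect_eq using assms(1) by blast
qed

definition u1 :: "nat \<Rightarrow> 'k::comm_ring_1 \<Rightarrow> nat \<Rightarrow> 'k matr" where
  "u1 i a = (\<lambda>v. if v = i then e00 a else 0)"

lemma u1_nz: "a \<noteq> 0 \<Longrightarrow> u1 i a \<noteq> 0"
proof
  assume "a \<noteq> 0" "u1 i a = 0"
  then have "u1 i a i 0 0 = 0" by simp
  then show False using \<open>a \<noteq> 0\<close> by (simp add: u1_def e00_def)
qed

lemma hom_dim_contra:
  fixes X Y :: "'k::field rep"
  assumes "is_rep n N X" "is_rep n N Y" "h \<in> Hom n N X Y" "h \<noteq> 0" "hom_dim n N X Y = 0"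
  shows False
  using hom_dim_pos[OF assms(1-4)] assms(5) by simp

definition cls :: "nat \<Rightarrow> 'k::comm_ring_1 rep \<Rightarrow> bool" where
  "cls n X \<longleftrightarrow> (\<exists>i. 1 \<le> i \<and> i \<le> n \<and> X = Srep i) \<or> (\<exists>i a. 1 \<le> i \<and> Suc i \<le> n \<and> a \<noteq> 0 \<and> X = Brep i a)"

lemma E3:
  fixes X Y :: "'k::field rep"
  assumes X: "is_rep n N X" and Y: "is_rep n N Y" and cX: "cls n X" and cY: "cls n Y"
    and l: "lbl Y \<le> lbl X" and h1: "hom_dim n N X Y = 0" and h2: "hom_dim n N Y X = 0"
  shows "ext1_dim n N X Y = 0"
proof -
  consider (SS) i j where "X = Srep i" "Y = Srep j"
    | (SB) i j b where "X = Srep i" "Y = Brep j b" "b \<noteq> 0"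
    | (BS) i a j where "X = Brep i a" "Y = Srep j" "a \<noteq> 0"
    | (BB) i a j b where "X = Brep i a" "Y = Brep j b" "a \<noteq> 0" "b \<noteq> 0"
    using cX cY unfolding cls_def by blast
  then show ?thesis
  proof cases
    case (SS i j)
    show ?thesis
    proof (cases "j = i")
      case True
      have "u1 i (1::'k) \<in> Hom n N X Y"
        by (rule hom_crit2) (auto simp: SS True u1_def e00_bounded)
      then have False by (rule hom_dim_contra[OF X Y _ u1_nz[OF one_neq_zero] h1])
      then show ?thesis ..
    next
      case False
      with l SS have "j < i" by simp
      show ?thesis
      proof (rule ext_zero_noarrows, intro ballI)
        fix \<alpha> assume "\<alpha> \<in> arrows n N"
        then show "dimv X (src \<alpha>) = 0 \<or> dimv Y (tgt \<alpha>) = 0"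
          by (cases rule: arrows_cases) (use \<open>j < i\<close> SS in auto)
      qed
    qed
  next
    case (SB i j b)
    with l have ji: "j \<le> i" by simp
    show ?thesis
    proof (cases "i = j \<or> i = Suc j")
      case True
      then show ?thesis
      proof
        assume ij: "i = j"
        have "u1 i (1::'k) \<in> Hom n N Y X"
          by (rule hom_crit2) (auto simp: SB ij u1_def e00_bounded)
        then have False by (rule hom_dim_contra[OF Y X _ u1_nz[OF one_neq_zero] h2])
      then show ?thesis ..
      next
        assume ij: "i = Suc j"
        have "u1 i (1::'k) \<in> Hom n N X Y"
          by (rule hom_crit2) (auto simp: SB ij u1_def e00_bounded)
        then have False by (rule hom_dim_contra[OF X Y _ u1_nz[OF one_neq_zero] h1])
      then show ?thesis ..
      qed
    next
      case False
      show ?thesis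
      proof (rule ext_zero_noarrows, intro ballI)
        fix \<alpha> assume "\<alpha> \<in> arrows n N"
        then show "dimv X (src \<alpha>) = 0 \<or> dimv Y (tgt \<alpha>) = 0"
          by (cases rule: arrows_cases) (use False ji SB in auto)
      qed
    qed
  next
    case (BS i a j)
    with l have ji: "j \<le> i" by simp
    show ?thesis
    proof (cases "i = j")
      case True
      have "u1 i (1::'k) \<in> Hom n N X Y"
        by (rule hom_crit2) (auto simp: BS True u1_def e00_bounded)
      then have False by (rule hom_dim_contra[OF X Y _ u1_nz[OF one_neq_zero] h1])
      then show ?thesis ..
    next
      case False
      show ?thesis
      proof (rule ext_zero_noarrows, intro ballI)
        fix \<alpha> assume "\<alpha> \<in> arrows n N"
        then show "dimv X (src \<alpha>) = 0 \<or> dimv Y (tgt \<alpha>) = 0"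
          by (cases rule: arrows_cases) (use False ji BS in auto)
      qed
    qed
  next
    case (BB i a j b)
    with l have ji: "j \<le> i" by simp
    show ?thesis
    proof (cases "i = j")
      case True
      define h where "h = (\<lambda>v. if v = i then e00 a else if v = Suc i then e00 b else (0::'k matr))"
      have "h \<in> Hom n N X Y"
        unfolding Hom_def mem_Collect_eq
      proof (intro conjI allI ballI)
        fix v show "bounded_matr (dimv Y v) (dimv X v) (h v)"
          by (auto simp: BB True h_def e00_bounded)
      next
        fix \<alpha> assume "\<alpha> \<in> arrows n N"
        show "mmul (dimv Y (src \<alpha>)) (mapv Y \<alpha>) (h (src \<alpha>)) = mmul (dimv X (tgt \<alpha>)) (h (tgt \<alpha>)) (mapv X \<alpha>)"
        proof (cases "\<alpha> = ArrX (Suc i)")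
          case True
          then show ?thesis using \<open>i = j\<close> by (simp add: BB h_def)
        next
          case False
          then show ?thesis using \<open>i = j\<close> by (simp add: BB)
        qed
      qed
      moreover have "h \<noteq> 0"
      proof
        assume "h = 0"
        then have "h i 0 0 = 0" by simp
        then show False using BB by (simp add: h_def e00_def)
      qed
      ultimately have False by (rule hom_dim_contra[OF X Y _ _ h1])
      then show ?thesis ..
    next
      case F1: False
      show ?thesis
      proof (cases "i = Suc j")
        case True
        have "u1 i (1::'k) \<in> Hom n N X Y"
          by (rule hom_crit2) (auto simp: BB True u1_def e00_bounded)
        then have False by (rule hom_dim_contra[OF X Y _ u1_nz[OF one_neq_zero] h1])
      then show ?thesis ..
      next
        case False
        show ?thesis
        proof (rule ext_zero_noarrows, intro ballI)
          fix \<alpha> assume "\<alpha> \<in> arrows n N"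
          then show "dimv X (src \<alpha>) = 0 \<or> dimv Y (tgt \<alpha>) = 0"
            by (cases rule: arrows_cases) (use False F1 ji BB in auto)
        qed
      qed
    qed
  qed
qed

lemma gunit_app: "gunit x a r s = (if (a, r, s) = x then 1 else 0)"
  by (simp add: gunit_def)

lemma gunit_inj: "inj (gunit :: 'a \<times> nat \<times> nat \<Rightarrow> ('a \<Rightarrow> 'k::field matr))"
proof (rule injI)
  fix x y :: "'a \<times> nat \<times> nat"
  assume e: "(gunit x :: 'a \<Rightarrow> 'k matr) = gunit y"
  obtain a r s where x: "x = (a, r, s)" by (cases x) auto
  have "(gunit x :: 'a \<Rightarrow> 'k matr) a r s = 1" by (simp add: gunit_app x)
  then have "(gunit y :: 'a \<Rightarrow> 'k matr) a r s = 1" using e by simp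
  then show "x = y" unfolding gunit_app x by (auto split: if_splits)
qed

lemma gunit_indep: "G.independent (gunit ` F :: ('a \<Rightarrow> 'k::field matr) set)"
  unfolding G.independent_explicit_module
proof (intro allI impI)
  fix t u v
  assume t: "finite t" "t \<subseteq> (gunit ` F :: ('a \<Rightarrow> 'k matr) set)" and z: "(\<Sum>v\<in>t. gsc (u v) v) = 0" and v: "v \<in> t"
  obtain x where vx: "v = gunit x" using t(2) v by blast
  obtain a r s where x: "x = (a, r, s)" by (cases x) auto
  have "0 = (\<Sum>v\<in>t. gsc (u v) v) a r s" using z by simp
  also have "\<dots> = (\<Sum>w\<in>t. u w * w a r s)" by (simp add: sum_fun_app)
  also have "\<dots> = (\<Sum>w\<in>t. if w = v then u v else 0)"
  proof (intro sum.cong refl)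
    fix w assume w: "w \<in> t"
    obtain y where wy: "w = gunit y" using t(2) w by blast
    have e1: "(w = v) = (y = x)" using inj_eq[OF gunit_inj, of y x] by (simp add: wy vx)
    have e2: "w a r s = (if y = x then 1 else 0)" unfolding wy gunit_app x by auto
    have "w a r s = (if w = v then 1 else 0)" using e1 e2 by simp
    then show "u w * w a r s = (if w = v then u v else 0)" by simp
  qed
  also have "\<dots> = u v" using t(1) v by (simp add: sum.delta')
  finally show "u v = 0" by simp
qed

lemma is_rep_S: "1 \<le> i \<Longrightarrow> i \<le> n \<Longrightarrow> is_rep n N (Srep i :: 'k::comm_ring_1 rep)"
  unfolding is_rep_def by (auto simp: bounded_matr_def)

lemma nonzero_S: "nonzero_rep (Srep i)"
  unfolding nonzero_rep_def by (rule exI[of _ i]) simp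

lemma hom_dim_SS: "hom_dim n N (Srep i :: 'k::field rep) (Srep i) = 1"
proof -
  have uH: "u1 i (1::'k) \<in> Hom n N (Srep i) (Srep i)"
    by (rule hom_crit2) (auto simp: u1_def e00_bounded)
  have sub: "Hom n N (Srep i :: 'k rep) (Srep i) \<subseteq> G.span {u1 i 1}"
  proof
    fix h assume h: "h \<in> Hom n N (Srep i :: 'k rep) (Srep i)"
    then have b: "bounded_matr (dimv (Srep i :: 'k rep) v) (dimv (Srep i :: 'k rep) v) (h v)" for v
      unfolding Hom_def by blast
    have "h = gsc (h i 0 0) (u1 i 1)"
    proof (intro ext)
      fix v r s
      show "h v r s = gsc (h i 0 0) (u1 i 1) v r s"
        using b[of v] by (cases "v = i"; cases "r = 0"; cases "s = 0") (auto simp: u1_def e00_def bounded_matr_def)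
    qed
    moreover have "gsc (h i 0 0) (u1 i (1::'k)) \<in> G.span {u1 i 1}"
      by (rule G.span_scale[OF G.span_base]) simp
    ultimately show "h \<in> G.span {u1 i 1}" by simp
  qed
  have "G.dim (Hom n N (Srep i :: 'k rep) (Srep i)) = card {u1 i (1::'k)}"
    by (rule G.dim_unique[OF _ sub G_indep_single[OF u1_nz[OF one_neq_zero]] refl]) (use uH in simp)
  then show ?thesis by (simp add: hom_dim_G)
qed

lemma ext_SS:
  assumes i: "1 \<le> i" "i \<le> n"
  shows "ext1_dim n N (Srep i :: 'k::field rep) (Srep i) = N i"
proof -
  define F where "F = (\<lambda>j. (Loop i j, 0::nat, 0::nat)) ` {..<N i}"
  have cF: "card F = N i" unfolding F_def by (subst card_image) (auto simp: inj_on_def)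
  have fF: "finite F" unfolding F_def by simp
  have cgF: "card (gunit ` F :: (arr \<Rightarrow> 'k matr) set) = N i"
    using card_image[OF inj_on_subset[OF gunit_inj subset_UNIV]] cF by metis
  have Zsub: "Ext_cocycles n N (Srep i :: 'k rep) (Srep i) \<subseteq> G.span (gunit ` F)"
  proof
    fix f assume f: "f \<in> Ext_cocycles n N (Srep i :: 'k rep) (Srep i)"
    show "f \<in> G.span (gunit ` F)"
    proof (rule G_span_support[OF fF])
      fix \<alpha> r s assume nF: "(\<alpha>, r, s) \<notin> F"
      show "f \<alpha> r s = 0"
      proof (cases "\<alpha> \<in> arrows n N")
        case False then show ?thesis using f unfolding Ext_cocycles_def by simp
      next
        case True
        have b: "bounded_matr (dimv (Srep i :: 'k rep) (tgt \<alpha>)) (dimv (Srep i :: 'k rep) (src \<alpha>)) (f \<alpha>)"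
          using f True unfolding Ext_cocycles_def by blast
        from True show ?thesis
        proof (cases rule: arrows_cases)
          case (1 m)
          then have "dimv (Srep i :: 'k rep) (tgt \<alpha>) = 0 \<or> dimv (Srep i :: 'k rep) (src \<alpha>) = 0" by auto
          then show ?thesis using b by (auto simp: bounded_matr_def)
        next
          case (2 i' j)
          show ?thesis
          proof (cases "i' = i \<and> r = 0 \<and> s = 0")
            case True
            have "j < N i" using \<open>\<alpha> \<in> arrows n N\<close> 2 True by (simp add: arrows_def)
            then have "(\<alpha>, r, s) \<in> F" using True 2 by (simp add: F_def)
            with nF show ?thesis by simp
          next
            case False
            then show ?thesis using b 2 by (auto simp: bounded_matr_def)
          qed
        qed
      qed
    qed
  qed
  have Zsup: "gunit ` F \<subseteq> Ext_cocycles n N (Srep i :: 'k rep) (Srep i)"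
  proof
    fix g assume "g \<in> (gunit ` F :: (arr \<Rightarrow> 'k matr) set)"
    then obtain j where j: "j < N i" and g: "g = gunit (Loop i j, 0, 0)" unfolding F_def by blast
    have La: "Loop i j \<in> arrows n N" using i j by (simp add: arrows_def)
    show "g \<in> Ext_cocycles n N (Srep i :: 'k rep) (Srep i)"
      unfolding Ext_cocycles_def mem_Collect_eq
    proof (intro conjI allI ballI impI)
      fix \<alpha> assume "\<alpha> \<notin> arrows n N"
      then have "\<alpha> \<noteq> Loop i j" using La by blast
      then show "g \<alpha> = 0" by (simp add: g gunit_def fun_eq_iff)
    next
      fix \<alpha> assume "\<alpha> \<in> arrows n N"
      show "bounded_matr (dimv (Srep i :: 'k rep) (tgt \<alpha>)) (dimv (Srep i :: 'k rep) (src \<alpha>)) (g \<alpha>)"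
        unfolding bounded_matr_def
      proof (intro allI impI)
        fix r c assume rc: "dimv (Srep i :: 'k rep) (tgt \<alpha>) \<le> r \<or> dimv (Srep i :: 'k rep) (src \<alpha>) \<le> c"
        show "g \<alpha> r c = 0"
        proof (cases "\<alpha> = Loop i j \<and> r = 0 \<and> c = 0")
          case True then show ?thesis using rc by simp
        next
          case False then show ?thesis by (auto simp: g gunit_def)
        qed
      qed
    next
      fix \<alpha> \<beta> show "mmul (dimv (Srep i :: 'k rep) (src \<beta>)) (mapv (Srep i) \<beta>) (g \<alpha>) + mmul (dimv (Srep i :: 'k rep) (tgt \<alpha>)) (g \<beta>) (mapv (Srep i) \<alpha>) = 0"
        by simp
    qed
  qed
  have d1: "G.dim (Ext_cocycles n N (Srep i :: 'k rep) (Srep i)) \<le> N i"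
    using G.dim_le_card[OF Zsub finite_imageI[OF fF]] cgF by simp
  have d2: "N i \<le> G.dim (Ext_cocycles n N (Srep i :: 'k rep) (Srep i))"
    using G_dim_ge[OF Zsup gunit_indep Zsub finite_imageI[OF fF]] cgF by simp
  have Bz: "Ext_coboundaries n N (Srep i :: 'k rep) (Srep i) \<subseteq> G.span {}"
  proof
    fix f assume "f \<in> Ext_coboundaries n N (Srep i :: 'k rep) (Srep i)"
    then have "f = 0" unfolding Ext_coboundaries_def by (auto simp: fun_eq_iff)
    then show "f \<in> G.span {}" by simp
  qed
  have d3: "G.dim (Ext_coboundaries n N (Srep i :: 'k rep) (Srep i)) = 0"
    using G.dim_le_card[OF Bz finite.emptyI] by simp
  show ?thesis using d1 d2 d3 by (simp add: ext1_dim_G)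
qed

lemma ext_BB:
  fixes a :: "'k::field"
  assumes XB: "is_rep n N (Brep i a)" and a: "a \<noteq> 0" and i: "1 \<le> i" "Suc i \<le> n"
  shows "ext1_dim n N (Brep i a) (Brep i a) = 0"
proof (rule ext_zero_ZB[OF XB XB], rule subsetI)
  fix f assume f: "f \<in> Ext_cocycles n N (Brep i a) (Brep i a)"
  have fna: "f \<alpha> = 0" if "\<alpha> \<notin> arrows n N" for \<alpha> using f that unfolding Ext_cocycles_def by blast
  have fb: "bounded_matr (dimv (Brep i a) (tgt \<alpha>)) (dimv (Brep i a) (src \<alpha>)) (f \<alpha>)"
    if "\<alpha> \<in> arrows n N" for \<alpha> using f that unfolding Ext_cocycles_def by blast
  have fc: "mmul (dimv (Brep i a) (src \<beta>)) (mapv (Brep i a) \<beta>) (f \<alpha>) + mmul (dimv (Brep i a) (tgt \<alpha>)) (f \<beta>) (mapv (Brep i a) \<alpha>) = 0"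
    if "\<alpha> \<in> arrows n N" "\<beta> \<in> arrows n N" "tgt \<alpha> = src \<beta>" for \<alpha> \<beta>
    using f that unfolding Ext_cocycles_def by blast
  have aS: "ArrX (Suc i) \<in> arrows n N" using i by (simp add: ArrX_in)
  define c where "c = f (ArrX (Suc i)) 0 0"
  define h where "h = (\<lambda>(v::nat) (r::nat) (s::nat). if v = i \<and> r = 0 \<and> s = 0 then c / a else (0::'k))"
  have hb: "\<forall>v. bounded_matr (dimv (Brep i a) v) (dimv (Brep i a) v) (h v)"
    by (auto simp: h_def bounded_matr_def)
  have key: "f \<alpha> r s = (if \<alpha> \<in> arrows n N
               then mmul (dimv (Brep i a) (src \<alpha>)) (mapv (Brep i a) \<alpha>) (h (src \<alpha>)) - mmul (dimv (Brep i a) (tgt \<alpha>)) (h (tgt \<alpha>)) (mapv (Brep i a) \<alpha>)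
               else 0) r s" for \<alpha> r s
  proof (cases "\<alpha> \<in> arrows n N")
    case False then show ?thesis using fna by simp
  next
    case True
    note \<alpha>A = True
    from True show ?thesis
    proof (cases rule: arrows_cases)
      case (1 m)
      show ?thesis
      proof (cases "m = Suc i")
        case True
        have lhs: "f \<alpha> r s = (if r = 0 \<and> s = 0 then c else 0)"
          using fb[OF \<alpha>A] 1 True by (auto simp: c_def bounded_matr_def)
        have "mmul (dimv (Brep i a) i) (e00 a) (h i) r s = (if r = 0 \<and> s = 0 then c else 0)"
          using a by (simp add: mmul_def e00_def h_def)
        then show ?thesis using lhs \<alpha>A 1 True by (simp add: mmul_def h_def)
      next
        case False
        have "dimv (Brep i a :: 'k rep) m = 0 \<or> dimv (Brep i a :: 'k rep) (m - 1) = 0"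
          using False 1 by auto
        then have "f \<alpha> = 0" using fb[OF \<alpha>A] 1 bnd_zero_dim by (auto)
        then show ?thesis using False 1 by simp
      qed
    next
      case (2 i' j)
      have rhs0: "(if \<alpha> \<in> arrows n N
               then mmul (dimv (Brep i a) (src \<alpha>)) (mapv (Brep i a) \<alpha>) (h (src \<alpha>)) - mmul (dimv (Brep i a) (tgt \<alpha>)) (h (tgt \<alpha>)) (mapv (Brep i a) \<alpha>)
               else 0) = 0" using 2 by simp
      have b2: "bounded_matr (dimv (Brep i a) i') (dimv (Brep i a) i') (f \<alpha>)" using fb[OF \<alpha>A] 2 by simp
      have "f \<alpha> r s = 0"
      proof (cases "i' = i")
        case True
        have "mmul (dimv (Brep i a) (src (ArrX (Suc i)))) (mapv (Brep i a) (ArrX (Suc i))) (f \<alpha>)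
            + mmul (dimv (Brep i a) (tgt \<alpha>)) (f (ArrX (Suc i))) (mapv (Brep i a) \<alpha>) = 0"
          by (rule fc[OF \<alpha>A aS]) (simp add: 2 True)
        then have "mmul 1 (e00 a) (f \<alpha>) 0 s = 0" using 2 True by simp
        then have "a * f \<alpha> 0 s = 0" by (simp add: mmul_def e00_def)
        then have "f \<alpha> 0 s = 0" using a by simp
        then show ?thesis using b2 True by (cases "r = 0"; cases "s = 0") (auto simp: bounded_matr_def)
      next
        case F: False
        show ?thesis
        proof (cases "i' = Suc i")
          case True
          have "mmul (dimv (Brep i a) (src \<alpha>)) (mapv (Brep i a) \<alpha>) (f (ArrX (Suc i)))
              + mmul (dimv (Brep i a) (tgt (ArrX (Suc i)))) (f \<alpha>) (mapv (Brep i a) (ArrX (Suc i))) = 0"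
            by (rule fc[OF aS \<alpha>A]) (simp add: 2 True)
          then have "mmul 1 (f \<alpha>) (e00 a) r 0 = 0" using 2 True by simp
          then have "f \<alpha> r 0 * a = 0" by (simp add: mmul_def e00_def)
          then have "f \<alpha> r 0 = 0" using a by simp
          then show ?thesis using b2 True by (cases "r = 0"; cases "s = 0") (auto simp: bounded_matr_def)
        next
          case False
          then show ?thesis using b2 F by (auto simp: bounded_matr_def)
        qed
      qed
      then show ?thesis using rhs0 by simp
    qed
  qed
  show "f \<in> Ext_coboundaries n N (Brep i a) (Brep i a)"
    unfolding Ext_coboundaries_def mem_Collect_eq
    by (rule exI[of _ h], intro conjI hb) (simp add: fun_eq_iff key)
qed

lemma brick_cls:
  fixes X :: "'k::field rep"
  assumes "is_rep n N X" "nonzero_rep X" "hom_dim n N X X = 1"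
  shows "cls n X"
  using brick_class[OF assms] unfolding cls_def .

lemma self_ext_le:
  fixes X :: "'k::field rep"
  assumes X: "is_rep n N X" and c: "cls n X"
  shows "ext1_dim n N X X \<le> Max (N ` {1..n})"
proof -
  from c consider (S) i where "1 \<le> i" "i \<le> n" "X = Srep i"
    | (B) i a where "1 \<le> i" "Suc i \<le> n" "a \<noteq> 0" "X = Brep i a"
    unfolding cls_def by blast
  then show ?thesis
  proof cases
    case S
    then have "ext1_dim n N X X = N i" using ext_SS by simp
    moreover have "N i \<le> Max (N ` {1..n})" using S by (intro Max_ge) auto
    ultimately show ?thesis by simp
  next
    case B
    then have "ext1_dim n N X X = 0" using ext_BB X by simp
    then show ?thesis by simp
  qed
qed

lemma upper:
  fixes Xs :: "'k::field rep list"
  assumes bs: "brick_set n N Xs" and ne: "Xs \<noteq> []"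
  shows "spectral_radius (adj_matrix n N Xs) \<le> real (Max (N ` {1..n}))"
proof -
  define m where "m = length Xs"
  define A where "A = adj_matrix n N Xs"
  have m0: "0 < m" using ne by (simp add: m_def)
  have Ac: "A \<in> carrier_mat m m" by (simp add: A_def adj_matrix_def m_def)
  have rep: "is_rep n N (Xs ! j)" "nonzero_rep (Xs ! j)" if "j < m" for j
    using bs that unfolding brick_set_def m_def by auto
  have hd: "hom_dim n N (Xs ! j) (Xs ! k) = (if j = k then 1 else 0)" if "j < m" "k < m" for j k
    using bs that unfolding brick_set_def m_def by auto
  have cl: "cls n (Xs ! j)" if "j < m" for j
  proof -
    have "hom_dim n N (Xs ! j) (Xs ! j) = 1" using hd[OF that that] by simp
    then show ?thesis using brick_cls[OF rep[OF that]] by blast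
  qed
  obtain lam where lam: "lam \<in> spectrum A" and sr: "spectral_radius A = norm lam"
    using spectral_radius_mem_max(1)[OF Ac m0] by blast
  obtain v where v: "v \<in> carrier_vec m" "v \<noteq> 0\<^sub>v m" "A *\<^sub>v v = lam \<cdot>\<^sub>v v"
    using lam Ac unfolding spectrum_def eigenvalue_def eigenvector_def by auto
  have dv: "dim_vec v = m" using v(1) by simp
  define J where "J = {j. j < m \<and> v $ j \<noteq> 0}"
  have Jne: "J \<noteq> {}"
  proof
    assume "J = {}"
    then have "v = 0\<^sub>v m" using dv by (intro eq_vecI) (auto simp: J_def)
    with v(2) show False by simp
  qed
  have Jf: "finite J" unfolding J_def by simp
  define Lm where "Lm = Max ((\<lambda>j. lbl (Xs ! j)) ` J)"
  have "Lm \<in> (\<lambda>j. lbl (Xs ! j)) ` J" unfolding Lm_def by (rule Max_in) (use Jf Jne in auto)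
  then obtain j0 where j0: "j0 \<in> J" "lbl (Xs ! j0) = Lm" by (metis imageE)
  have jmax: "lbl (Xs ! k) \<le> lbl (Xs ! j0)" if "k \<in> J" for k
    using Max_ge[of "(\<lambda>j. lbl (Xs ! j)) ` J"] Jf that j0(2) unfolding Lm_def by auto
  have j0m: "j0 < m" and vj0: "v $ j0 \<noteq> 0" using j0(1) by (auto simp: J_def)
  have Aent: "A $$ (j, k) = of_nat (ext1_dim n N (Xs ! j) (Xs ! k))" if "j < m" "k < m" for j k
    using that by (simp add: A_def adj_matrix_def m_def)
  have terms: "A $$ (j0, k) * v $ k = 0" if "k < m" "k \<noteq> j0" for k
  proof (cases "v $ k = 0")
    case True then show ?thesis by simp
  next
    case False
    then have "k \<in> J" using that by (simp add: J_def)
    then have l: "lbl (Xs ! k) \<le> lbl (Xs ! j0)" by (rule jmax)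
    have "ext1_dim n N (Xs ! j0) (Xs ! k) = 0"
      by (rule E3[OF rep(1)[OF j0m] rep(1)[OF that(1)] cl[OF j0m] cl[OF that(1)] l])
         (use hd[OF j0m that(1)] hd[OF that(1) j0m] that(2) in auto)
    then show ?thesis using Aent[OF j0m that(1)] by simp
  qed
  have "(A *\<^sub>v v) $ j0 = (\<Sum>k\<in>{0..<m}. A $$ (j0, k) * v $ k)"
    using Ac j0m dv by (simp add: scalar_prod_def)
  also have "\<dots> = A $$ (j0, j0) * v $ j0"
  proof -
    have "(\<Sum>k\<in>{0..<m}. A $$ (j0, k) * v $ k) = A $$ (j0, j0) * v $ j0 + (\<Sum>k\<in>{0..<m} - {j0}. A $$ (j0, k) * v $ k)"
      using j0m by (subst sum.remove[of _ j0]) auto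
    also have "(\<Sum>k\<in>{0..<m} - {j0}. A $$ (j0, k) * v $ k) = 0"
      by (rule sum.neutral) (use terms in auto)
    finally show ?thesis by simp
  qed
  finally have e1: "(A *\<^sub>v v) $ j0 = A $$ (j0, j0) * v $ j0" .
  have "(A *\<^sub>v v) $ j0 = lam * v $ j0" using v(3) j0m dv by simp
  then have "A $$ (j0, j0) * v $ j0 = lam * v $ j0" unfolding e1 .
  then have "lam = A $$ (j0, j0)" using vj0 by (metis mult_right_cancel)
  then have "norm lam = real (ext1_dim n N (Xs ! j0) (Xs ! j0))"
    using Aent[OF j0m j0m] by simp
  also have "\<dots> \<le> real (Max (N ` {1..n}))"
    using self_ext_le[OF rep(1)[OF j0m] cl[OF j0m]] by simp
  finally show ?thesis using sr by (simp add: A_def)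
qed

lemma lower:
  assumes i: "1 \<le> i" "i \<le> n"
  shows "real (N i) \<le> spectral_radius (adj_matrix n N [Srep i :: 'k::field rep])"
proof -
  define A where "A = adj_matrix n N [Srep i :: 'k rep]"
  have Ac: "A \<in> carrier_mat 1 1" by (simp add: A_def adj_matrix_def)
  have A00: "A $$ (0, 0) = of_nat (N i)" using ext_SS[OF i, where 'k='k] by (simp add: A_def adj_matrix_def)
  define v :: "complex vec" where "v = vec 1 (\<lambda>_. 1)"
  have "eigenvector A v (of_nat (N i))"
    unfolding eigenvector_def
  proof (intro conjI)
    show "v \<in> carrier_vec (dim_row A)" using Ac by (simp add: v_def)
    show "v \<noteq> 0\<^sub>v (dim_row A)"
    proof
      assume "v = 0\<^sub>v (dim_row A)"
      then have "v $ 0 = 0\<^sub>v (dim_row A) $ 0" by simp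
      then show False using Ac by (simp add: v_def)
    qed
    show "A *\<^sub>v v = of_nat (N i) \<cdot>\<^sub>v v"
    proof (rule eq_vecI)
      fix j assume "j < dim_vec (of_nat (N i) \<cdot>\<^sub>v v)"
      then have j: "j = 0" by (simp add: v_def)
      show "(A *\<^sub>v v) $ j = (of_nat (N i) \<cdot>\<^sub>v v) $ j"
        using Ac A00 j by (simp add: v_def scalar_prod_def)
    qed (use Ac in \<open>simp add: v_def\<close>)
  qed
  then have "of_nat (N i) \<in> spectrum A" unfolding spectrum_def eigenvalue_def by auto
  then have "norm (of_nat (N i) :: complex) \<in> norm ` spectrum A" by (rule imageI)
  then have "norm (of_nat (N i) :: complex) \<le> spectral_radius A"
    by (rule spectral_radius_mem_max(2)[OF Ac, rotated]) simp
  then show ?thesis by (simp add: A_def)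
qed

theorem theorem5p1:
  fixes n :: nat and N :: "nat \<Rightarrow> nat"
  assumes "1 \<le> n"
  shows "fpd TYPE('k::alg_closed_field) n N = ereal (real (Max (N ` {1..n})))"
proof -
  define S where "S = {Xs :: 'k rep list. brick_set n N Xs \<and> Xs \<noteq> []}"
  define M where "M = Max (N ` {1..n})"
  have "M \<in> N ` {1..n}" unfolding M_def by (rule Max_in) (use assms in auto)
  then obtain i0 where i0: "i0 \<in> {1..n}" "N i0 = M" by blast
  have le: "(SUP Xs\<in>S. ereal (spectral_radius (adj_matrix n N Xs))) \<le> ereal (real M)"
  proof (rule SUP_least)
    fix Xs assume "Xs \<in> S"
    then show "ereal (spectral_radius (adj_matrix n N Xs)) \<le> ereal (real M)"
      using upper[of n N Xs] unfolding S_def M_def by auto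
  qed
  have inS: "[Srep i0 :: 'k rep] \<in> S"
    unfolding S_def brick_set_def using i0(1) is_rep_S[of i0 n N] nonzero_S[of i0] hom_dim_SS[of n N i0]
    by auto
  have ge: "ereal (real M) \<le> (SUP Xs\<in>S. ereal (spectral_radius (adj_matrix n N Xs)))"
    by (rule SUP_upper2[OF inS]) (use lower[of i0 n N, where 'k='k] i0 in auto)
  show ?thesis unfolding fpd_def S_def[symmetric] M_def[symmetric] using le ge by (rule antisym)
qed


end
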